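(* Let $X$ be a complex Banach space with open unit ball $B$, and let $Y$ be a closed subspace of $X$ of finite codimension with open unit ball $B_Y$. Then for every $f\in A_u(B)$, $Cl_B(f,0)=Cl_{B_Y}(f|_{B_Y},0)$.
   Context: $A_u(B)$ is the algebra of bounded holomorphic functions on $B$ that are uniformly continuous on $B$. For a Banach space $Z$ with open unit ball $B_Z$ and a function $g$ on $B_Z$, $Cl_{B_Z}(g,0)$ is the set of all $\lambda\in\mathbb C$ such that $\lambda=\lim_\alpha g(z_\alpha)$ for some net $(z_\alpha)$ in $B_Z$ converging weakly to $0$ (equivalently weak-star to $0$ in $Z^{**}$). *)

theory Defs
  imports "HOL-Analysis.Analysis"
begin

class complex_normed_vector = real_normed_vector +
  fixes scaleC :: "complex \<Rightarrow> 'a \<Rightarrow> 'a"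
  assumes scaleC_add_right: "scaleC a (x + y) = scaleC a x + scaleC a y"
    and scaleC_add_left: "scaleC (a + b) x = scaleC a x + scaleC b x"
    and scaleC_scaleC: "scaleC a (scaleC b x) = scaleC (a * b) x"
    and scaleC_one: "scaleC 1 x = x"
    and scaleC_of_real: "scaleC (of_real r) x = scaleR r x"
    and norm_scaleC: "norm (scaleC a x) = cmod a * norm x"

class complex_banach = complex_normed_vector + banach

instantiation complex :: complex_banach
begin
definition scaleC_complex :: "complex \<Rightarrow> complex \<Rightarrow> complex" where
  "scaleC_complex a x = a * x"
instance
  by standard (auto simp: scaleC_complex_def algebra_simps norm_mult scaleR_conv_of_real)
end

definition csubspace :: "'a::complex_normed_vector set \<Rightarrow> bool" where
  "csubspace Y \<longleftrightarrow> 0 \<in> Y \<and> (\<forall>x\<in>Y. \<forall>y\<in>Y. x + y \<in> Y) \<and> (\<forall>c. \<forall>x\<in>Y. scaleC c x \<in> Y)"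

definition finite_codim :: "'a::complex_normed_vector set \<Rightarrow> bool" where
  "finite_codim Y \<longleftrightarrow> (\<exists>S. finite S \<and>
      (\<forall>x. \<exists>y\<in>Y. \<exists>c. x = y + (\<Sum>s\<in>S. scaleC (c s) s)))"

definition bounded_clinear_functional_on ::
    "'a::complex_normed_vector set \<Rightarrow> ('a \<Rightarrow> complex) \<Rightarrow> bool" where
  "bounded_clinear_functional_on Y \<phi> \<longleftrightarrow>
     (\<forall>x\<in>Y. \<forall>y\<in>Y. \<phi> (x + y) = \<phi> x + \<phi> y) \<and>
     (\<forall>c. \<forall>x\<in>Y. \<phi> (scaleC c x) = c * \<phi> x) \<and>
     (\<exists>K. \<forall>x\<in>Y. cmod (\<phi> x) \<le> K * norm x)"

definition weakly_to_zero_in :: "'a::complex_normed_vector set \<Rightarrow> 'a filter \<Rightarrow> bool" where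
  "weakly_to_zero_in Y F \<longleftrightarrow>
     (\<forall>\<phi>. bounded_clinear_functional_on Y \<phi> \<longrightarrow> (\<phi> \<longlongrightarrow> 0) F)"

text \<open>Cluster set at 0: Cl_{B_Y}(g,0), with B_Y the open unit ball of the subspace Y
  (for Y = UNIV this is Cl_B(g,0)).  Nets are represented by proper filters.\<close>

definition cluster_set_zero ::
    "'a::complex_normed_vector set \<Rightarrow> ('a \<Rightarrow> complex) \<Rightarrow> complex set" where
  "cluster_set_zero Y g = {l. \<exists>F. F \<noteq> bot \<and>
      eventually (\<lambda>z. z \<in> Y \<inter> ball 0 1) F \<and>
      weakly_to_zero_in Y F \<and> (g \<longlongrightarrow> l) F}"

definition holomorphic_on_ban :: "('a::complex_normed_vector \<Rightarrow> complex) \<Rightarrow> 'a set \<Rightarrow> bool" where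
  "holomorphic_on_ban f U \<longleftrightarrow> (\<forall>x\<in>U. \<exists>D. (f has_derivative D) (at x) \<and>
      (\<forall>c h. D (scaleC c h) = c * D h))"

definition A_u :: "('a::complex_normed_vector \<Rightarrow> complex) set" where
  "A_u = {f. holomorphic_on_ban f (ball 0 1) \<and> bounded (f ` ball 0 1) \<and>
             uniformly_continuous_on (ball 0 1) f}"

end

theory Submission
  imports Defs
begin

lemma scaleC_zero_right[simp]: "scaleC a (0::'a::complex_normed_vector) = 0"
proof -
  have "scaleC a (0::'a) = scaleC a 0 + scaleC a 0" using scaleC_add_right[of a "0::'a" 0] by simp
  thus ?thesis by simp
qed

lemma scaleC_zero_left[simp]: "scaleC 0 (x::'a::complex_normed_vector) = 0"
  using scaleC_of_real[of 0 x] by simp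

lemma scaleC_minus_right: "scaleC a (- x) = - scaleC a (x::'a::complex_normed_vector)"
proof -
  have "scaleC a x + scaleC a (-x) = 0" using scaleC_add_right[of a x "-x"] by simp
  hence "scaleC a (-x) + scaleC a x = 0" by (simp only: add.commute)
  thus ?thesis by (simp add: eq_neg_iff_add_eq_0)
qed

lemma scaleC_diff_right: "scaleC a (x - y) = scaleC a x - scaleC a (y::'a::complex_normed_vector)"
  using scaleC_add_right[of a x "-y"] by (simp add: scaleC_minus_right)

lemma scaleC_minus_left: "scaleC (- a) x = - scaleC a (x::'a::complex_normed_vector)"
proof -
  have "scaleC a x + scaleC (-a) x = 0" using scaleC_add_left[of a "-a" x] by simp
  hence "scaleC (-a) x + scaleC a x = 0" by (simp only: add.commute)
  thus ?thesis by (simp add: eq_neg_iff_add_eq_0)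
qed

lemma scaleC_diff_left: "scaleC (a - b) x = scaleC a x - scaleC b (x::'a::complex_normed_vector)"
  using scaleC_add_left[of a "-b" x] by (simp add: scaleC_minus_left)

lemma scaleC_sum_right: "scaleC a (\<Sum>i\<in>I. g i) = (\<Sum>i\<in>I. scaleC a (g i::'a::complex_normed_vector))"
  by (induction I rule: infinite_finite_induct) (auto simp: scaleC_add_right)

lemma scaleC_minus1: "scaleC (-1) x = - (x::'a::complex_normed_vector)"
  using scaleC_minus_left[of 1 x] by (simp add: scaleC_one)

lemma tendsto_scaleC_left:
  fixes s :: "'a::complex_normed_vector"
  assumes "(g \<longlongrightarrow> a) F"
  shows "((\<lambda>x. scaleC (g x) s) \<longlongrightarrow> scaleC a s) F"
proof -
  have "((\<lambda>x. g x - a) \<longlongrightarrow> 0) F" using assms by (rule LIM_zero)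
  hence "((\<lambda>x. cmod (g x - a)) \<longlongrightarrow> 0) F" by (rule tendsto_norm_zero)
  hence "((\<lambda>x. cmod (g x - a) * norm s) \<longlongrightarrow> 0 * norm s) F"
    by (rule tendsto_mult[OF _ tendsto_const])
  moreover have "(\<lambda>x. norm (scaleC (g x - a) s)) = (\<lambda>x. cmod (g x - a) * norm s)"
    by (simp only: norm_scaleC)
  ultimately have "((\<lambda>x. norm (scaleC (g x - a) s)) \<longlongrightarrow> 0) F" by simp
  hence "((\<lambda>x. scaleC (g x - a) s) \<longlongrightarrow> 0) F"
    by (rule tendsto_norm_zero_cancel)
  hence "((\<lambda>x. scaleC (g x - a) s + scaleC a s) \<longlongrightarrow> 0 + scaleC a s) F"
    by (rule tendsto_add[OF _ tendsto_const])
  thus ?thesis by (simp add: scaleC_diff_left)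
qed

lemma cs_zero: "csubspace Y \<Longrightarrow> 0 \<in> Y" by (simp add: csubspace_def)
lemma cs_add: "csubspace Y \<Longrightarrow> x \<in> Y \<Longrightarrow> y \<in> Y \<Longrightarrow> x + y \<in> Y" by (simp add: csubspace_def)
lemma cs_scale: "csubspace Y \<Longrightarrow> x \<in> Y \<Longrightarrow> scaleC c x \<in> Y" by (simp add: csubspace_def)
lemma cs_scaleR: "csubspace Y \<Longrightarrow> x \<in> Y \<Longrightarrow> scaleR r x \<in> Y"
  by (metis cs_scale scaleC_of_real)
lemma cs_minus: "csubspace Y \<Longrightarrow> x \<in> Y \<Longrightarrow> - x \<in> Y"
  by (metis cs_scale scaleC_minus1)
lemma cs_diff: "csubspace Y \<Longrightarrow> x \<in> Y \<Longrightarrow> y \<in> Y \<Longrightarrow> x - y \<in> Y"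
  by (metis cs_add cs_minus diff_conv_add_uminus)

lemma coef_unique:
  assumes Y: "csubspace Y" and s: "s \<notin> Y" and y: "y1 \<in> Y" "y2 \<in> Y"
    and eq: "y1 + scaleC c1 s = y2 + scaleC c2 s"
  shows "c1 = c2"
proof (rule ccontr)
  assume ne: "c1 \<noteq> c2"
  have "scaleC (c1 - c2) s = y2 - y1" using eq by (simp add: scaleC_diff_left algebra_simps)
  hence "scaleC (1/(c1-c2)) (scaleC (c1 - c2) s) \<in> Y" using Y y by (simp add: cs_scale cs_diff)
  hence "s \<in> Y" using ne by (simp add: scaleC_scaleC scaleC_one)
  thus False using s by simp
qed

definition coef :: "'a::complex_normed_vector set \<Rightarrow> 'a \<Rightarrow> 'a \<Rightarrow> complex" where
  "coef Y s w = (THE c. \<exists>y\<in>Y. w = y + scaleC c s)"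

lemma coef_eq:
  assumes "csubspace Y" "s \<notin> Y" "y \<in> Y"
  shows "coef Y s (y + scaleC c s) = c"
  unfolding coef_def
  apply (rule the_equality)
  using assms apply blast
  using assms coef_unique by metis

lemma dist_lemma:
  assumes Y: "csubspace Y" "closed Y" and s: "s \<notin> Y"
  shows "\<exists>d>0. \<forall>y\<in>Y. \<forall>c. cmod c * d \<le> norm (y + scaleC c s)"
proof -
  define d where "d = infdist s Y"
  have ne: "Y \<noteq> {}" using cs_zero[OF Y(1)] by auto
  have "d \<noteq> 0" using in_closed_iff_infdist_zero[OF Y(2) ne] s d_def by simp
  hence dpos: "d > 0" using infdist_nonneg[of s Y] d_def by simp
  have "cmod c * d \<le> norm (y + scaleC c s)" if y: "y \<in> Y" for y c
  proof (cases "c = 0")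
    case True thus ?thesis by simp
  next
    case False
    have m: "- scaleC (1/c) y \<in> Y" using Y y by (simp add: cs_scale cs_minus)
    have "d \<le> dist s (- scaleC (1/c) y)" unfolding d_def by (rule infdist_le[OF m])
    also have "\<dots> = norm (s + scaleC (1/c) y)" by (simp add: dist_norm)
    finally have "cmod c * d \<le> cmod c * norm (s + scaleC (1/c) y)"
      by (simp add: mult_left_mono)
    also have "\<dots> = norm (scaleC c (s + scaleC (1/c) y))" by (simp add: norm_scaleC)
    also have "\<dots> = norm (y + scaleC c s)" using False
      by (simp add: scaleC_add_right scaleC_scaleC scaleC_one add.commute)
    finally show ?thesis .
  qed
  thus ?thesis using dpos by blast
qed

lemma Yprime_sub:
  assumes Y: "csubspace Y"
  shows "csubspace {y + scaleC c s | y c. y \<in> Y}"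
  unfolding csubspace_def
proof (intro conjI ballI allI)
  show "0 \<in> {y + scaleC c s | y c. y \<in> Y}"
    using cs_zero[OF Y] by (auto intro!: exI[of _ 0])
next
  fix x z assume "x \<in> {y + scaleC c s | y c. y \<in> Y}" "z \<in> {y + scaleC c s | y c. y \<in> Y}"
  then obtain y1 c1 y2 c2 where "x = y1 + scaleC c1 s" "z = y2 + scaleC c2 s" "y1 \<in> Y" "y2 \<in> Y" by blast
  moreover have "y1 + scaleC c1 s + (y2 + scaleC c2 s) = (y1 + y2) + scaleC (c1 + c2) s"
    by (simp add: scaleC_add_left algebra_simps)
  ultimately have "x + z = (y1 + y2) + scaleC (c1 + c2) s" "y1 + y2 \<in> Y" using cs_add[OF Y] by auto
  thus "x + z \<in> {y + scaleC c s | y c. y \<in> Y}" by blast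
next
  fix a x assume "x \<in> {y + scaleC c s | y c. y \<in> Y}"
  then obtain y1 c1 where "x = y1 + scaleC c1 s" "y1 \<in> Y" by blast
  moreover have "scaleC a (y1 + scaleC c1 s) = scaleC a y1 + scaleC (a * c1) s"
    by (simp add: scaleC_add_right scaleC_scaleC)
  ultimately show "scaleC a x \<in> {y + scaleC c s | y c. y \<in> Y}" using cs_scale[OF Y] by auto
qed

lemma Yprime_closed:
  assumes Y: "csubspace Y" "closed Y" and s: "s \<notin> Y"
  shows "closed {y + scaleC c s | y c. y \<in> Y}"
  unfolding closed_sequential_limits
proof (intro allI impI)
  fix x l assume h: "(\<forall>n. x n \<in> {y + scaleC c s | y c. y \<in> Y}) \<and> x \<longlonglongrightarrow> l"
  then have "\<forall>n. \<exists>yc. fst yc \<in> Y \<and> x n = fst yc + scaleC (snd yc) s" by fastforce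
  then obtain yc where yc: "\<And>n. fst (yc n) \<in> Y \<and> x n = fst (yc n) + scaleC (snd (yc n)) s" by metis
  define y where "y n = fst (yc n)" for n
  define c where "c n = snd (yc n)" for n
  have yY: "y n \<in> Y" and xe: "x n = y n + scaleC (c n) s" for n using yc y_def c_def by auto
  obtain d where d: "d > 0" "\<And>y c. y \<in> Y \<Longrightarrow> cmod c * d \<le> norm (y + scaleC c s)"
    using dist_lemma[OF Y s] by blast
  have xl: "x \<longlonglongrightarrow> l" using h by blast
  have "Cauchy x" using xl by (rule LIMSEQ_imp_Cauchy)
  have "Cauchy c"
  proof (rule metric_CauchyI)
    fix e :: real assume e: "e > 0"
    then obtain M where M: "\<And>m n. m \<ge> M \<Longrightarrow> n \<ge> M \<Longrightarrow> dist (x m) (x n) < e * d"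
      using metric_CauchyD[OF \<open>Cauchy x\<close>, of "e * d"] d e by (meson mult_pos_pos)
    have "dist (c m) (c n) < e" if "m \<ge> M" "n \<ge> M" for m n
    proof -
      have "cmod (c m - c n) * d \<le> norm ((y m - y n) + scaleC (c m - c n) s)"
        using d(2) cs_diff[OF Y(1) yY yY] by blast
      also have "(y m - y n) + scaleC (c m - c n) s = x m - x n"
        using xe[of m] xe[of n] by (simp add: scaleC_diff_left algebra_simps)
      also have "norm (x m - x n) < e * d" using M[OF that] by (simp add: dist_norm)
      finally have "cmod (c m - c n) * d < e * d" .
      thus ?thesis using d(1) by (simp add: dist_norm)
    qed
    thus "\<exists>M. \<forall>m\<ge>M. \<forall>n\<ge>M. dist (c m) (c n) < e" by blast
  qed
  then obtain cl where cl: "c \<longlonglongrightarrow> cl" using Cauchy_convergent_iff convergent_def by blast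
  have "(\<lambda>n. x n - scaleC (c n) s) \<longlonglongrightarrow> l - scaleC cl s"
    by (intro tendsto_intros xl tendsto_scaleC_left cl)
  moreover have "x n - scaleC (c n) s = y n" for n using xe[of n] by simp
  ultimately have "y \<longlonglongrightarrow> l - scaleC cl s" by simp
  hence "l - scaleC cl s \<in> Y" using Y(2) yY unfolding closed_sequential_limits by blast
  moreover have "l = (l - scaleC cl s) + scaleC cl s" by simp
  ultimately show "l \<in> {y + scaleC c s | y c. y \<in> Y}" by blast
qed

lemma bcf_UNIV:
  assumes "bounded_clinear_functional_on UNIV \<psi>"
  shows "\<psi> (x + y) = \<psi> x + \<psi> y" "\<psi> (scaleC c x) = c * \<psi> x"
    "\<exists>K. \<forall>x. cmod (\<psi> x) \<le> K * norm x"
  using assms unfolding bounded_clinear_functional_on_def by auto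

lemma proj_exists:
  assumes "finite S"
  shows "csubspace Y \<Longrightarrow> closed Y \<Longrightarrow> (\<forall>x. \<exists>y\<in>Y. \<exists>c. x = y + (\<Sum>s\<in>S. scaleC (c s) s)) \<Longrightarrow>
    \<exists>(n::nat) \<psi> e. (\<forall>i<n. bounded_clinear_functional_on UNIV (\<psi> i)) \<and>
       (\<forall>z. z - (\<Sum>i<n. scaleC (\<psi> i z) (e i)) \<in> Y)"
  using assms
proof (induction S arbitrary: Y rule: finite_induct)
  case empty
  hence Yall: "\<forall>z. z \<in> Y" by auto
  show ?case
    by (rule exI[where x=0]) (simp add: Yall)
next
  case (insert s S)
  have decomp: "\<exists>y\<in>Y. \<exists>c. x = (y + scaleC (c s) s) + (\<Sum>t\<in>S. scaleC (c t) t)" for x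
  proof -
    obtain y c where "y \<in> Y" "x = y + (\<Sum>t\<in>insert s S. scaleC (c t) t)" using insert.prems(3) by blast
    thus ?thesis using insert.hyps by (auto simp: sum.insert add.assoc)
  qed
  show ?case
  proof (cases "s \<in> Y")
    case True
    have "\<forall>x. \<exists>y\<in>Y. \<exists>c. x = y + (\<Sum>t\<in>S. scaleC (c t) t)"
    proof
      fix x obtain y c where "y \<in> Y" "x = (y + scaleC (c s) s) + (\<Sum>t\<in>S. scaleC (c t) t)"
        using decomp by blast
      moreover have "y + scaleC (c s) s \<in> Y" using True \<open>y \<in> Y\<close> insert.prems(1) cs_add cs_scale by blast
      ultimately show "\<exists>y\<in>Y. \<exists>c. x = y + (\<Sum>t\<in>S. scaleC (c t) t)" by blast
    qed
    thus ?thesis using insert.IH insert.prems by blast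
  next
    case False
    define Y' where "Y' = {y + scaleC c s | y c. y \<in> Y}"
    have sY': "csubspace Y'" unfolding Y'_def by (rule Yprime_sub[OF insert.prems(1)])
    have cY': "closed Y'" unfolding Y'_def by (rule Yprime_closed[OF insert.prems(1,2) False])
    have "\<forall>x. \<exists>y\<in>Y'. \<exists>c. x = y + (\<Sum>t\<in>S. scaleC (c t) t)"
    proof
      fix x obtain y c where "y \<in> Y" "x = (y + scaleC (c s) s) + (\<Sum>t\<in>S. scaleC (c t) t)"
        using decomp by blast
      moreover have "y + scaleC (c s) s \<in> Y'" using \<open>y \<in> Y\<close> unfolding Y'_def by blast
      ultimately show "\<exists>y\<in>Y'. \<exists>c. x = y + (\<Sum>t\<in>S. scaleC (c t) t)" by blast
    qed
    then obtain n :: nat and \<psi> e where bc: "\<forall>i<n. bounded_clinear_functional_on UNIV (\<psi> i)"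
      and pr: "\<forall>z. z - (\<Sum>i<n. scaleC (\<psi> i z) (e i)) \<in> Y'"
      using insert.IH[OF sY' cY'] by blast
    define W where "W z = z - (\<Sum>i<n. scaleC (\<psi> i z) (e i))" for z
    have "\<forall>i\<in>{..<n}. \<exists>K. \<forall>x. cmod (\<psi> i x) \<le> K * norm x" using bc bcf_UNIV(3) by blast
    then obtain K where K: "\<And>i x. i < n \<Longrightarrow> cmod (\<psi> i x) \<le> K i * norm x"
      using bchoice[of "{..<n}"] by (metis lessThan_iff)
    obtain d where d: "d > 0" "\<And>y c. y \<in> Y \<Longrightarrow> cmod c * d \<le> norm (y + scaleC c s)"
      using dist_lemma[OF insert.prems(1,2) False] by blast
    define cf where "cf z = coef Y s (W z)" for z
    have dec: "\<exists>y\<in>Y. W z = y + scaleC (cf z) s" for z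
    proof -
      obtain y c where "y \<in> Y" "W z = y + scaleC c s" using pr unfolding W_def Y'_def by blast
      moreover have "cf z = c" unfolding cf_def using calculation coef_eq[OF insert.prems(1) False] by simp
      ultimately show ?thesis by blast
    qed
    have Wadd: "W (a + b) = W a + W b" for a b
    proof -
      have "(\<Sum>i<n. scaleC (\<psi> i (a+b)) (e i)) = (\<Sum>i<n. scaleC (\<psi> i a) (e i) + scaleC (\<psi> i b) (e i))"
        by (intro sum.cong) (auto simp: scaleC_add_left bcf_UNIV(1)[OF bc[rule_format]])
      thus ?thesis unfolding W_def by (simp add: sum.distrib algebra_simps)
    qed
    have Wsc: "W (scaleC c a) = scaleC c (W a)" for c a
    proof -
      have "(\<Sum>i<n. scaleC (\<psi> i (scaleC c a)) (e i)) = (\<Sum>i<n. scaleC c (scaleC (\<psi> i a) (e i)))"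
        by (intro sum.cong) (auto simp: scaleC_scaleC bcf_UNIV(2)[OF bc[rule_format]])
      thus ?thesis unfolding W_def by (simp add: scaleC_diff_right scaleC_sum_right)
    qed
    have Wn: "norm (W z) \<le> (1 + (\<Sum>i<n. K i * norm (e i))) * norm z" for z
    proof -
      have "norm (W z) \<le> norm z + norm (\<Sum>i<n. scaleC (\<psi> i z) (e i))"
        unfolding W_def by (rule norm_triangle_ineq4)
      also have "norm (\<Sum>i<n. scaleC (\<psi> i z) (e i)) \<le> (\<Sum>i<n. cmod (\<psi> i z) * norm (e i))"
        using norm_sum[of "\<lambda>i. scaleC (\<psi> i z) (e i)" "{..<n}"] by (simp add: norm_scaleC)
      also have "\<dots> \<le> (\<Sum>i<n. K i * norm z * norm (e i))"
        using K by (intro sum_mono mult_right_mono) auto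
      finally show ?thesis by (simp add: algebra_simps sum_distrib_left sum_distrib_right)
    qed
    have chi_add: "cf (a + b) = cf a + cf b" for a b
    proof -
      obtain ya yb where y: "ya \<in> Y" "yb \<in> Y" "W a = ya + scaleC (cf a) s" "W b = yb + scaleC (cf b) s"
        using dec by meson
      have "W (a + b) = (ya + yb) + scaleC (cf a + cf b) s"
        using y Wadd by (simp add: scaleC_add_left algebra_simps)
      thus ?thesis unfolding cf_def
        using coef_eq[OF insert.prems(1) False cs_add[OF insert.prems(1) y(1,2)]] by simp
    qed
    have chi_sc: "cf (scaleC c a) = c * cf a" for c a
    proof -
      obtain ya where y: "ya \<in> Y" "W a = ya + scaleC (cf a) s" using dec by meson
      have "W (scaleC c a) = scaleC c ya + scaleC (c * cf a) s"
        using y Wsc by (simp add: scaleC_add_right scaleC_scaleC)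
      thus ?thesis unfolding cf_def
        using coef_eq[OF insert.prems(1) False cs_scale[OF insert.prems(1) y(1)]] by simp
    qed
    have chi_b: "cmod (cf z) \<le> ((1 + (\<Sum>i<n. K i * norm (e i))) / d) * norm z" for z
    proof -
      obtain y where y: "y \<in> Y" "W z = y + scaleC (cf z) s" using dec by meson
      have "cmod (cf z) * d \<le> (1 + (\<Sum>i<n. K i * norm (e i))) * norm z"
      proof -
        have "cmod (cf z) * d \<le> norm (W z)" using d(2)[OF y(1), of "cf z"] y(2) by simp
        thus ?thesis using Wn[of z] by linarith
      qed
      thus ?thesis using d(1) by (simp add: field_simps)
    qed
    have bchi: "bounded_clinear_functional_on UNIV cf"
      unfolding bounded_clinear_functional_on_def using chi_add chi_sc chi_b by blast
    define \<psi>' where "\<psi>' = \<psi>(n := cf)"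
    define e' where "e' = e(n := s)"
    have "\<forall>i<Suc n. bounded_clinear_functional_on UNIV (\<psi>' i)"
      using bc bchi unfolding \<psi>'_def by (auto simp: less_Suc_eq)
    moreover have "z - (\<Sum>i<Suc n. scaleC (\<psi>' i z) (e' i)) \<in> Y" for z
    proof -
      have "(\<Sum>i<n. scaleC (\<psi>' i z) (e' i)) = (\<Sum>i<n. scaleC (\<psi> i z) (e i))"
        unfolding \<psi>'_def e'_def by (intro sum.cong) auto
      hence "z - (\<Sum>i<Suc n. scaleC (\<psi>' i z) (e' i)) = W z - scaleC (cf z) s"
        unfolding W_def by (simp add: \<psi>'_def e'_def)
      moreover obtain y where y: "y \<in> Y" "W z = y + scaleC (cf z) s" using dec by meson
      ultimately show ?thesis by simp
    qed
    ultimately show ?thesis by blast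
  qed
qed

lemma uc_tendsto:
  assumes uc: "uniformly_continuous_on S f" and ev: "eventually (\<lambda>x. a x \<in> S) F" "eventually (\<lambda>x. b x \<in> S) F"
    and lim: "((\<lambda>x. dist (a x) (b x)) \<longlongrightarrow> 0) F"
  shows "((\<lambda>x. dist (f (a x)) (f (b x))) \<longlongrightarrow> 0) F"
  unfolding tendsto_iff
proof (intro allI impI)
  fix e :: real assume e: "e > 0"
  obtain dl where dl: "dl > 0" "\<And>x x'. x \<in> S \<Longrightarrow> x' \<in> S \<Longrightarrow> dist x' x < dl \<Longrightarrow> dist (f x') (f x) < e"
    using uc e unfolding uniformly_continuous_on_def by metis
  have "eventually (\<lambda>x. dist (a x) (b x) < dl) F" using lim dl(1) unfolding tendsto_iff by simp
  thus "eventually (\<lambda>x. dist (dist (f (a x)) (f (b x))) 0 < e) F"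
    using ev by eventually_elim (simp add: dl(2))
qed

lemma easy_dir:
  assumes "l \<in> cluster_set_zero Y f"
  shows "l \<in> cluster_set_zero UNIV f"
proof -
  obtain F where F: "F \<noteq> bot" "eventually (\<lambda>z. z \<in> Y \<inter> ball 0 1) F" "weakly_to_zero_in Y F" "(f \<longlongrightarrow> l) F"
    using assms unfolding cluster_set_zero_def by blast
  have "eventually (\<lambda>z. z \<in> UNIV \<inter> ball 0 1) F" using F(2) by (rule eventually_mono) auto
  moreover have "weakly_to_zero_in UNIV F"
    using F(3) unfolding weakly_to_zero_in_def bounded_clinear_functional_on_def by blast
  ultimately show ?thesis using F unfolding cluster_set_zero_def by blast
qed

theorem proposition2p5:
  fixes Y :: "'a::complex_banach set" and f :: "'a \<Rightarrow> complex"
  assumes "csubspace Y" and "closed Y" and "finite_codim Y"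
    and "f \<in> A_u"
  shows "cluster_set_zero UNIV f = cluster_set_zero Y f"
proof
  show "cluster_set_zero Y f \<subseteq> cluster_set_zero UNIV f" using easy_dir by blast
next
  show "cluster_set_zero UNIV f \<subseteq> cluster_set_zero Y f"
  proof
    fix l assume "l \<in> cluster_set_zero UNIV f"
    then obtain F where F: "F \<noteq> bot" "eventually (\<lambda>z. z \<in> UNIV \<inter> ball 0 1) F"
      "weakly_to_zero_in UNIV F" "(f \<longlongrightarrow> l) F"
      unfolding cluster_set_zero_def by blast
    have Fb: "eventually (\<lambda>z. norm z < 1) F" using F(2) by (rule eventually_mono) simp
    obtain S where S: "finite S" "\<forall>x. \<exists>y\<in>Y. \<exists>c. x = y + (\<Sum>s\<in>S. scaleC (c s) s)"
      using assms(3) unfolding finite_codim_def by blast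
    obtain n :: nat and \<psi> e where bc: "\<forall>i<n. bounded_clinear_functional_on UNIV (\<psi> i)"
      and pr: "\<forall>z. z - (\<Sum>i<n. scaleC (\<psi> i z) (e i)) \<in> Y"
      using proj_exists[OF S(1) assms(1,2) S(2)] by blast
    define P where "P z = (\<Sum>i<n. scaleC (\<psi> i z) (e i))" for z
    define Q where "Q z = z - P z" for z
    define r where "r z = 1 / (1 + norm (P z))" for z
    define yv where "yv z = scaleR (r z) (Q z)" for z
    define G where "G = filtermap yv F"
    have QY: "Q z \<in> Y" for z using pr unfolding Q_def P_def by blast
    have rpos: "r z > 0" "r z \<le> 1" for z
    proof -
      have p: "0 < 1 + norm (P z)" by (simp add: add_pos_nonneg)
      thus "r z > 0" unfolding r_def by simp
      show "r z \<le> 1" unfolding r_def using p by (simp add: field_simps)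
    qed
    obtain K where K: "\<And>i x. i < n \<Longrightarrow> cmod (\<psi> i x) \<le> K i * norm x"
    proof -
      have "\<forall>i\<in>{..<n}. \<exists>K. \<forall>x. cmod (\<psi> i x) \<le> K * norm x" using bc bcf_UNIV(3) by blast
      thus ?thesis using bchoice[of "{..<n}"] that by (metis lessThan_iff)
    qed
    have Pn: "norm (P z) \<le> (\<Sum>i<n. K i * norm (e i)) * norm z" for z
    proof -
      have "norm (P z) \<le> (\<Sum>i<n. cmod (\<psi> i z) * norm (e i))"
        unfolding P_def using norm_sum[of "\<lambda>i. scaleC (\<psi> i z) (e i)" "{..<n}"] by (simp add: norm_scaleC)
      also have "\<dots> \<le> (\<Sum>i<n. K i * norm z * norm (e i))"
        using K by (intro sum_mono mult_right_mono) auto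
      finally show ?thesis by (simp add: algebra_simps sum_distrib_left sum_distrib_right)
    qed
    have Padd: "P (a + b) = P a + P b" for a b
    proof -
      have "(\<Sum>i<n. scaleC (\<psi> i (a+b)) (e i)) = (\<Sum>i<n. scaleC (\<psi> i a) (e i) + scaleC (\<psi> i b) (e i))"
        by (intro sum.cong) (auto simp: scaleC_add_left bcf_UNIV(1)[OF bc[rule_format]])
      thus ?thesis unfolding P_def by (simp add: sum.distrib algebra_simps)
    qed
    have Psc: "P (scaleC c a) = scaleC c (P a)" for c a
    proof -
      have "(\<Sum>i<n. scaleC (\<psi> i (scaleC c a)) (e i)) = (\<Sum>i<n. scaleC c (scaleC (\<psi> i a) (e i)))"
        by (intro sum.cong) (auto simp: scaleC_scaleC bcf_UNIV(2)[OF bc[rule_format]])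
      thus ?thesis unfolding P_def by (simp add: scaleC_sum_right)
    qed
    have Plim: "((\<lambda>z. P z) \<longlongrightarrow> 0) F"
      unfolding P_def
    proof (rule tendsto_null_sum)
      fix i assume "i \<in> {..<n}"
      hence "(\<psi> i \<longlongrightarrow> 0) F" using bc F(3) unfolding weakly_to_zero_in_def by auto
      hence "((\<lambda>z. scaleC (\<psi> i z) (e i)) \<longlongrightarrow> scaleC 0 (e i)) F" by (rule tendsto_scaleC_left)
      thus "((\<lambda>z. scaleC (\<psi> i z) (e i)) \<longlongrightarrow> 0) F" by simp
    qed
    have rlim: "(r \<longlongrightarrow> 1) F"
    proof -
      have "((\<lambda>z. 1 / (1 + norm (P z))) \<longlongrightarrow> 1 / (1 + norm (0::'a))) F"
        by (intro tendsto_intros Plim) auto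
      thus ?thesis unfolding r_def by simp
    qed
    have "G \<noteq> bot" unfolding G_def using F(1) by (simp add: filtermap_bot_iff)
    moreover have "eventually (\<lambda>z. z \<in> Y \<inter> ball 0 1) G"
      unfolding G_def eventually_filtermap using Fb
    proof (rule eventually_mono)
      fix z :: 'a assume z: "norm z < 1"
      have "yv z \<in> Y" unfolding yv_def using QY cs_scaleR[OF assms(1)] by blast
      moreover have "norm (yv z) < 1"
      proof -
        have "norm (Q z) \<le> norm z + norm (P z)" unfolding Q_def by (rule norm_triangle_ineq4)
        also have "\<dots> < 1 + norm (P z)" using z by simp
        finally have "r z * norm (Q z) < r z * (1 + norm (P z))" using rpos(1)[of z] by simp
        also have "\<dots> = 1"
        proof -
          have "1 + norm (P z) > 0" by (simp add: add_pos_nonneg)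
          thus ?thesis unfolding r_def by simp
        qed
        finally show ?thesis unfolding yv_def using rpos(1)[of z] by simp
      qed
      ultimately show "yv z \<in> Y \<inter> ball 0 1" by simp
    qed
    moreover have "weakly_to_zero_in Y G"
      unfolding weakly_to_zero_in_def
    proof (intro allI impI)
      fix \<phi> assume \<phi>: "bounded_clinear_functional_on Y \<phi>"
      obtain K\<phi> where K\<phi>: "\<And>x. x \<in> Y \<Longrightarrow> cmod (\<phi> x) \<le> K\<phi> * norm x"
        using \<phi> unfolding bounded_clinear_functional_on_def by blast
      have \<phi>add: "\<phi> (x + y) = \<phi> x + \<phi> y" if "x \<in> Y" "y \<in> Y" for x y
        using \<phi> that unfolding bounded_clinear_functional_on_def by blast
      have \<phi>sc: "\<phi> (scaleC c x) = c * \<phi> x" if "x \<in> Y" for c x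
        using \<phi> that unfolding bounded_clinear_functional_on_def by blast
      have "bounded_clinear_functional_on UNIV (\<lambda>z. \<phi> (Q z))"
        unfolding bounded_clinear_functional_on_def
      proof (intro conjI ballI allI)
        fix x y :: 'a
        have "Q (x + y) = Q x + Q y" unfolding Q_def using Padd by simp
        thus "\<phi> (Q (x + y)) = \<phi> (Q x) + \<phi> (Q y)" using \<phi>add QY by simp
      next
        fix c and x :: 'a
        have "Q (scaleC c x) = scaleC c (Q x)" unfolding Q_def using Psc by (simp add: scaleC_diff_right)
        thus "\<phi> (Q (scaleC c x)) = c * \<phi> (Q x)" using \<phi>sc QY by simp
      next
        show "\<exists>K. \<forall>x\<in>UNIV. cmod (\<phi> (Q x)) \<le> K * norm x"
        proof (intro exI ballI)
          fix x :: 'a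
          have "cmod (\<phi> (Q x)) \<le> K\<phi> * norm (Q x)" using K\<phi> QY by blast
          also have "\<dots> \<le> max K\<phi> 0 * norm (Q x)" by (simp add: mult_right_mono)
          finally have a: "cmod (\<phi> (Q x)) \<le> max K\<phi> 0 * norm (Q x)" .
          have "norm (Q x) \<le> norm x + norm (P x)" unfolding Q_def by (rule norm_triangle_ineq4)
          also have "\<dots> \<le> norm x + (\<Sum>i<n. K i * norm (e i)) * norm x" using Pn by simp
          finally have b: "norm (Q x) \<le> (1 + (\<Sum>i<n. K i * norm (e i))) * norm x" by (simp add: algebra_simps)
          have "max K\<phi> 0 * norm (Q x) \<le> max K\<phi> 0 * ((1 + (\<Sum>i<n. K i * norm (e i))) * norm x)"
            using b by (intro mult_left_mono) auto
          with a show "cmod (\<phi> (Q x)) \<le> (max K\<phi> 0 * (1 + (\<Sum>i<n. K i * norm (e i)))) * norm x"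
            by (simp add: algebra_simps)
        qed
      qed
      hence "((\<lambda>z. \<phi> (Q z)) \<longlongrightarrow> 0) F" using F(3) unfolding weakly_to_zero_in_def by blast
      hence "((\<lambda>z. complex_of_real (r z) * \<phi> (Q z)) \<longlongrightarrow> complex_of_real 1 * 0) F"
        by (intro tendsto_intros rlim)
      moreover have "\<phi> (yv z) = complex_of_real (r z) * \<phi> (Q z)" for z
        unfolding yv_def using \<phi>sc[OF QY] by (simp add: scaleC_of_real[symmetric])
      ultimately have "((\<lambda>z. \<phi> (yv z)) \<longlongrightarrow> 0) F" by simp
      thus "(\<phi> \<longlongrightarrow> 0) G" unfolding G_def filterlim_filtermap .
    qed
    moreover have "(f \<longlongrightarrow> l) G"
    proof -
      have dlim: "((\<lambda>z. dist (yv z) z) \<longlongrightarrow> 0) F"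
      proof (rule tendsto_sandwich[where f="\<lambda>_. 0" and h="\<lambda>z. (1 - r z) + norm (P z)"])
        show "eventually (\<lambda>z. 0 \<le> dist (yv z) z) F" by simp
        show "eventually (\<lambda>z. dist (yv z) z \<le> (1 - r z) + norm (P z)) F" using Fb
        proof (rule eventually_mono)
          fix z :: 'a assume z: "norm z < 1"
          have "yv z - z = - (scaleR (1 - r z) z) - scaleR (r z) (P z)"
            unfolding yv_def Q_def by (simp add: algebra_simps)
          hence "dist (yv z) z \<le> norm (scaleR (1 - r z) z) + norm (scaleR (r z) (P z))"
            by (metis dist_norm norm_minus_cancel norm_triangle_ineq4)
          also have "\<dots> = (1 - r z) * norm z + r z * norm (P z)" using rpos[of z] by simp
          also have "\<dots> \<le> (1 - r z) * 1 + 1 * norm (P z)"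
            using rpos[of z] z by (intro add_mono mult_mono) auto
          finally show "dist (yv z) z \<le> (1 - r z) + norm (P z)" by simp
        qed
        have "((\<lambda>z. (1 - r z) + norm (P z)) \<longlongrightarrow> (1 - 1) + norm (0::'a)) F"
          by (intro tendsto_intros rlim Plim)
        thus "((\<lambda>z. (1 - r z) + norm (P z)) \<longlongrightarrow> 0) F" by simp
      qed (simp)
      have uc: "uniformly_continuous_on (ball 0 1) f" using assms(4) unfolding A_u_def by blast
      have ev1: "eventually (\<lambda>z. yv z \<in> ball 0 1) F"
        using \<open>eventually (\<lambda>z. z \<in> Y \<inter> ball 0 1) G\<close> unfolding G_def eventually_filtermap
        by (rule eventually_mono) simp
      have ev2: "eventually (\<lambda>z. z \<in> ball 0 1) F" using Fb by (rule eventually_mono) simp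
      have "((\<lambda>z. dist (f (yv z)) (f z)) \<longlongrightarrow> 0) F" by (rule uc_tendsto[OF uc ev1 ev2 dlim])
      hence "((\<lambda>z. f (yv z) - f z) \<longlongrightarrow> 0) F"
        by (simp add: dist_norm tendsto_norm_zero_iff)
      hence "((\<lambda>z. f (yv z)) \<longlongrightarrow> l) F" by (rule Lim_transform[OF F(4)])
      thus ?thesis unfolding G_def filterlim_filtermap .
    qed
    ultimately show "l \<in> cluster_set_zero Y f" unfolding cluster_set_zero_def by blast
  qed
qed

end
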